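(* Let $f$ be a transcendental entire function and $f_n(z):=f(nz)/n$ for $n\in\mathbb N$. Suppose $(f_{n_k})$ is a subsequence and $Q\subset\mathbb C$ is a finite set such that $(f_{n_k})$ converges uniformly on compact subsets of $\mathbb C\setminus Q$ (with respect to the spherical metric). Then $0\in Q$, and there exists $0<s<1$ such that $f_{n_k}\to\infty$ uniformly on compact subsets of $\mathbb D_s\setminus\{0\}$.
   Context: $\mathbb D_r$ denotes the open Euclidean disk of radius $r$ centered at $0$. Convergence is locally uniform with respect to the spherical metric on $\hat{\mathbb C}$, so the limit may be $\equiv\infty$. *)

theory Defs
  imports "HOL-Complex_Analysis.Complex_Analysis"
begin

text \<open>Points of the Riemann sphere: Some z is the finite point z, None is infinity.\<close>

definition chordal :: "complex option \<Rightarrow> complex option \<Rightarrow> real" where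
  "chordal a b = (case (a, b) of
      (Some z, Some w) \<Rightarrow> 2 * cmod (z - w) / (sqrt (1 + (cmod z)\<^sup>2) * sqrt (1 + (cmod w)\<^sup>2))
    | (Some z, None) \<Rightarrow> 2 / sqrt (1 + (cmod z)\<^sup>2)
    | (None, Some w) \<Rightarrow> 2 / sqrt (1 + (cmod w)\<^sup>2)
    | (None, None) \<Rightarrow> 0)"

definition sph_unif_conv_on ::
  "(nat \<Rightarrow> complex \<Rightarrow> complex) \<Rightarrow> (complex \<Rightarrow> complex option) \<Rightarrow> complex set \<Rightarrow> bool" where
  "sph_unif_conv_on F g K \<longleftrightarrow>
     (\<forall>e>0. \<forall>\<^sub>F k in sequentially. \<forall>z\<in>K. chordal (Some (F k z)) (g z) < e)"

definition sph_loc_unif_conv_on ::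
  "(nat \<Rightarrow> complex \<Rightarrow> complex) \<Rightarrow> (complex \<Rightarrow> complex option) \<Rightarrow> complex set \<Rightarrow> bool" where
  "sph_loc_unif_conv_on F g U \<longleftrightarrow>
     (\<forall>K. compact K \<and> K \<subseteq> U \<longrightarrow> sph_unif_conv_on F g K)"

definition transcendental_entire :: "(complex \<Rightarrow> complex) \<Rightarrow> bool" where
  "transcendental_entire f \<longleftrightarrow> f holomorphic_on UNIV \<and> \<not> (\<exists>p. \<forall>z. f z = poly p z)"

definition rescale :: "(complex \<Rightarrow> complex) \<Rightarrow> nat \<Rightarrow> complex \<Rightarrow> complex" where
  "rescale f n z = f (of_nat n * z) / of_nat n"

end

theory Submission
  imports Defs "HOL-Complex_Analysis.Complex_Analysis"
begin


definition stp :: "complex option \<Rightarrow> complex \<times> real" where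
 "stp a = (case a of None \<Rightarrow> (0,1)
   | Some z \<Rightarrow> (2*z / complex_of_real (1+(cmod z)^2), ((cmod z)^2 - 1)/(1+(cmod z)^2)))"

lemma stp_alg:
  fixes a b uu vv PA PB :: real
  assumes PA: "PA = a^2+b^2" and PB: "PB = uu^2+vv^2"
  shows "4*((a-uu)^2+(b-vv)^2)/((1+PA)*(1+PB)) = (2*a/(1+PA) - 2*uu/(1+PB))^2 + (2*b/(1+PA)-2* vv/(1+PB))^2 + ((PA-1)/(1+PA) - (PB-1)/(1+PB))^2"
proof -
  have pA: "1+PA > 0" "1+PB>0" using PA PB by (simp_all add: add_pos_nonneg)
  have num: "4*((a-uu)^2+(b-vv)^2)*((1+PA)*(1+PB)) = (2*a*(1+PB) - 2*uu*(1+PA))^2 + (2*b*(1+PB)-2* vv*(1+PA))^2 + ((PA-1)*(1+PB) - (PB-1)*(1+PA))^2"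
    unfolding PA PB by algebra
  have e1: "2*a/(1+PA) - 2*uu/(1+PB) = (2*a*(1+PB) - 2*uu*(1+PA))/((1+PA)*(1+PB))"
     "2*b/(1+PA) - 2* vv/(1+PB) = (2*b*(1+PB) - 2* vv*(1+PA))/((1+PA)*(1+PB))"
     "(PA-1)/(1+PA) - (PB-1)/(1+PB) = ((PA-1)*(1+PB) - (PB-1)*(1+PA))/((1+PA)*(1+PB))"
    using pA by (simp_all add: field_simps)
  have gen: "\<And>D S X Y Z::real. D > 0 \<Longrightarrow> 4*S*D = X^2+Y^2+Z^2 \<Longrightarrow> 4*S/D = (X/D)^2 + (Y/D)^2 + (Z/D)^2"
  proof -
    fix D S X Y Z :: real assume "D>0" "4*S*D = X^2+Y^2+Z^2"
    then have "(X/D)^2 + (Y/D)^2 + (Z/D)^2 = (4*S*D)/D^2" by (simp add: power_divide add_divide_distrib)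
    also have "\<dots> = 4*S/D" using \<open>D>0\<close> by (simp add: power2_eq_square)
    finally show "4*S/D = (X/D)^2 + (Y/D)^2 + (Z/D)^2" by simp
  qed
  show ?thesis unfolding e1 using pA num by (intro gen) auto
qed

lemma stp_Some_Some:
  "chordal (Some z) (Some w) = dist (stp (Some z)) (stp (Some w))"
proof -
  define A where "A = (cmod z)^2" 
  define B where "B = (cmod w)^2"
  have A: "A = (Re z)^2 + (Im z)^2" unfolding A_def by (simp add: cmod_power2)
  have B: "B = (Re w)^2 + (Im w)^2" unfolding B_def by (simp add: cmod_power2)
  have A0: "A \<ge> 0" "B \<ge> 0" unfolding A_def B_def by auto
  have l: "(chordal (Some z) (Some w))^2 = 4 * (cmod (z-w))^2 / ((1+A)*(1+B))"
    unfolding chordal_def using A0 by (simp add: A_def B_def power_divide power_mult_distrib)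
  have r: "(dist (stp (Some z)) (stp (Some w)))^2 =
     (cmod (2*z / complex_of_real (1+A) - 2*w / complex_of_real (1+B)))^2 + ((A-1)/(1+A) - (B-1)/(1+B))^2"
    unfolding stp_def option.case dist_Pair_Pair A_def B_def
    by (simp add: dist_norm add_nonneg_nonneg)
  have e1: "(cmod (2*z / complex_of_real (1+A) - 2*w / complex_of_real (1+B)))^2
     = (2*Re z/(1+A) - 2*Re w/(1+B))^2 + (2*Im z/(1+A) - 2*Im w/(1+B))^2"
  proof -
    have "2*z / complex_of_real (1+A) - 2*w / complex_of_real (1+B) = Complex (2*Re z/(1+A) - 2*Re w/(1+B)) (2*Im z/(1+A) - 2*Im w/(1+B))"
    proof -
      have n1: "complex_of_real (1+A) \<noteq> 0" "complex_of_real (1+B) \<noteq> 0" using A0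
        by (simp_all only: of_real_eq_0_iff)
      have "2*z / complex_of_real (1+A) = complex_of_real (2/(1+A)) * z"
           "2*w / complex_of_real (1+B) = complex_of_real (2/(1+B)) * w"
        using n1 by (simp_all add: field_simps)
      then show ?thesis by (simp add: complex_eq_iff)
    qed
    then show ?thesis by (simp add: cmod_power2)
  qed
  have e2: "(cmod (z-w))^2 = (Re z - Re w)^2 + (Im z - Im w)^2" by (simp add: cmod_power2)
  have sq: "(chordal (Some z) (Some w))^2 = (dist (stp (Some z)) (stp (Some w)))^2"
    unfolding l r e1 e2 by (rule stp_alg[OF A B])
  have "chordal (Some z) (Some w) \<ge> 0" unfolding chordal_def by simp
  then show ?thesis using sq by (simp add: power2_eq_iff_nonneg)
qed

lemma stp_Some: "stp (Some z) = (complex_of_real (2/(1+(cmod z)^2)) * z, ((cmod z)^2-1)/(1+(cmod z)^2))"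
proof -
  have n1: "complex_of_real (1+(cmod z)^2) \<noteq> 0"
  proof -
    have "1 + (cmod z)^2 > 0" by (simp add: add_pos_nonneg)
    then show ?thesis by (simp only: of_real_eq_0_iff)
  qed
  have "2*z / complex_of_real (1+(cmod z)^2) = complex_of_real (2/(1+(cmod z)^2)) * z"
    using n1 by (simp add: field_simps)
  then show ?thesis unfolding stp_def by simp
qed

lemma stp_None_dist: "dist (stp (Some z)) (stp None) = 2 / sqrt (1 + (cmod z)^2)"
proof -
  define A where "A = (cmod z)^2"
  have A0: "A \<ge> 0" unfolding A_def by simp
  have sN: "stp None = (0,1)" by (simp add: stp_def)
  have d: "dist (stp (Some z)) (stp None) = sqrt ((dist (complex_of_real (2/(1+A)) * z) 0)^2 + (dist ((A-1)/(1+A)) 1)^2)"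
    by (simp only: stp_Some sN dist_Pair_Pair A_def)
  have "dist (complex_of_real (2/(1+A)) * z) 0 = (2/(1+A)) * cmod z" using A0
    by (simp only: dist_norm diff_zero norm_mult norm_of_real) simp
  moreover have "(dist ((A-1)/(1+A)) 1)^2 = ((A-1)/(1+A) - 1)^2" by (simp add: dist_real_def)
  ultimately have "(dist (stp (Some z)) (stp None))^2 = (2/(1+A))^2 * A + ((A-1)/(1+A) - 1)^2"
    unfolding d using A0 by (simp add: power_mult_distrib power_divide A_def)

  also have "\<dots> = 4 / (1+A)"
  proof -
    have p: "1+A > 0" using A0 by simp
    have "(A-1)/(1+A) - 1 = -2/(1+A)" using p by (simp add: field_simps)
    then have "(2/(1+A))^2 * A + ((A-1)/(1+A) - 1)^2 = 4*A/(1+A)^2 + 4/(1+A)^2"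
      by (simp add: power_divide)
    also have "\<dots> = 4*(A+1)/(1+A)^2" by (simp add: add_divide_distrib algebra_simps)
    also have "\<dots> = (4*(1+A))/((1+A)*(1+A))" by (simp add: power2_eq_square add.commute)
    also have "\<dots> = 4/(1+A)" using p by (metis div_by_1 nonzero_mult_divide_mult_cancel_right order_less_irrefl times_divide_times_eq)
    finally show ?thesis .
  qed
  also have "\<dots> = (2 / sqrt (1 + A))^2" using A0 by (simp add: power_divide)
  finally show ?thesis using A0 unfolding A_def by (simp add: power2_eq_iff_nonneg)
qed

lemma chordal_stp: "chordal a b = dist (stp a) (stp b)"
proof (cases a; cases b)
  fix z w assume "a = Some z" "b = Some w" then show ?thesis by (simp add: stp_Some_Some)
next
  fix z assume ab: "a = Some z" "b = None"
  then show ?thesis using stp_None_dist[of z] by (simp add: chordal_def)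
next
  fix w assume ab: "a = None" "b = Some w"
  then show ?thesis using stp_None_dist[of w] by (simp add: chordal_def dist_commute)
next
  assume "a = None" "b = None" then show ?thesis by (simp add: chordal_def)
qed



lemma growth_poly:
  fixes f :: "complex \<Rightarrow> complex" and r :: "nat \<Rightarrow> nat"
  assumes holf: "f holomorphic_on UNIV" and sm: "strict_mono r" and pos: "\<forall>k. r k > 0"
    and t: "t > 0"
    and bd: "\<forall>k\<ge>k0. \<forall>z. norm z = t \<longrightarrow> norm (rescale f (r k) z) \<le> M"
  shows "\<exists>p. \<forall>z. f z = poly p z"
proof -
  have rinf: "filterlim (\<lambda>k. real (r k)) at_top sequentially"
    using filterlim_subseq[OF sm] filterlim_real_sequentially filterlim_compose by blast
  have dz: "(deriv ^^ j) f 0 = 0" if j: "j \<ge> 2" for j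
  proof -
    define c where "c = fact j * M / t^j"
    have le: "norm ((deriv ^^ j) f 0) \<le> c * inverse (real (r k)) ^ (j - 1)" if k: "k \<ge> k0" for k
    proof -
      have rk: "real (r k) > 0" using pos by simp
      have "norm ((deriv ^^ j) f 0) \<le> fact j * (M * real (r k)) / (real (r k) * t) ^ j"
      proof (rule Cauchy_inequality)
        show "f holomorphic_on ball 0 (real (r k) * t)" using holf holomorphic_on_subset by blast
        show "continuous_on (cball 0 (real (r k) * t)) f"
          using holf holomorphic_on_imp_continuous_on holomorphic_on_subset by blast
        show "0 < real (r k) * t" using rk t by simp
        fix x :: complex assume x: "norm (0 - x) = real (r k) * t"
        define z where "z = x / of_nat (r k)"
        have xz: "x = of_nat (r k) * z" unfolding z_def using rk by simp
        have nz: "norm z = t" unfolding z_def using x rk by (simp add: norm_divide)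
        have "norm (rescale f (r k) z) \<le> M" using bd k nz by blast
        then have "norm (f x) / real (r k) \<le> M" unfolding rescale_def xz by (simp add: norm_divide)
        then show "norm (f x) \<le> M * real (r k)" using rk by (simp add: field_simps)
      qed
      also have "\<dots> = c * inverse (real (r k)) ^ (j - 1)"
      proof -
        have "(real (r k) * t) ^ j = real (r k) * real (r k) ^ (j-1) * t^j"
          using j by (simp add: power_mult_distrib power_eq_if[of "real (r k)" j])
        then show ?thesis unfolding c_def using rk t by (simp add: field_simps power_inverse)
      qed
      finally show ?thesis .
    qed
    have lim: "(\<lambda>k. c * inverse (real (r k)) ^ (j - 1)) \<longlonglongrightarrow> 0"
    proof -
      have "(\<lambda>k. inverse (real (r k))) \<longlonglongrightarrow> 0"
        using tendsto_inverse_0_at_top[OF rinf] .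
      then have "(\<lambda>k. inverse (real (r k)) ^ (j-1)) \<longlonglongrightarrow> 0 ^ (j-1)"
        by (intro tendsto_intros)
      then have "(\<lambda>k. c * inverse (real (r k)) ^ (j-1)) \<longlonglongrightarrow> c * 0 ^ (j-1)"
        by (rule tendsto_mult_left)
      moreover have "c * (0::real) ^ (j-1) = 0" using j by (simp add: power_0_left)
      ultimately show ?thesis by metis
    qed
    have "norm ((deriv ^^ j) f 0) \<le> 0"
      using LIMSEQ_le_const[OF lim] le by blast
    then show ?thesis by simp
  qed
  have "f \<xi> = poly [:f 0, deriv f 0:] \<xi>" for \<xi>
  proof -
    have "((\<lambda>k. (deriv ^^ k) f 0 / (fact k) * (\<xi> - 0)^k) sums f \<xi>)"
    proof (rule holomorphic_power_series [where r = "norm \<xi> + 1"])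
      show "f holomorphic_on ball 0 (cmod \<xi> + 1)" "\<xi> \<in> ball 0 (cmod \<xi> + 1)"
        using holf holomorphic_on_subset by auto
    qed
    then have sumsf: "((\<lambda>k. (deriv ^^ k) f 0 / (fact k) * \<xi>^k) sums f \<xi>)" by simp
    have "(deriv ^^ (k + 2)) f 0 / fact (k + 2) * \<xi> ^ (k + 2) = 0" for k
      using dz[of "k+2"] by simp
    then have "(\<lambda>i. (deriv ^^ (i + 2)) f 0 / fact (i + 2) * \<xi> ^ (i + 2)) sums 0"
      by (simp add: sums_0)
    with sums_split_initial_segment [OF sumsf, where n = 2]
    have "f \<xi> = (\<Sum>i<2. (deriv ^^ i) f 0 / fact i * \<xi> ^ i)"
      using sums_unique2 by fastforce
    then show ?thesis by (simp add: numeral_2_eq_2 algebra_simps)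
  qed
  then show ?thesis by blast
qed



lemma stp_None: "stp None = (0,1)" by (simp add: stp_def)

lemma stp_Some_snd: "snd (stp (Some w)) < 1"
proof -
  have p: "1 + (cmod w)^2 > 0" by (simp add: add_pos_nonneg)
  have "(cmod w)^2 - 1 < 1 + (cmod w)^2" by simp
  then have "((cmod w)^2 - 1) / (1 + (cmod w)^2) < 1" using p by (simp add: divide_less_eq)
  then show ?thesis by (simp add: stp_Some)
qed

lemma stp_eq_None_iff: "stp x = stp None \<longleftrightarrow> x = None"
proof (cases x)
  case (Some w) then show ?thesis using stp_Some_snd[of w] by (auto simp: stp_None)
qed simp

lemma near_N: "dist (stp (Some w)) (stp None) < 1 \<Longrightarrow> 1 < norm w"
proof -
  assume a: "dist (stp (Some w)) (stp None) < 1"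
  have p: "sqrt (1 + (cmod w)^2) > 0" by (simp add: add_pos_nonneg)
  from a have "2 / sqrt (1 + (cmod w)^2) < 1" by (simp add: stp_None_dist)
  then have "2 < sqrt (1 + (cmod w)^2)" using p by (simp add: field_simps)
  then have "sqrt 4 < sqrt (1 + (cmod w)^2)" by simp
  then have "4 < 1 + (cmod w)^2" by (simp only: real_sqrt_less_iff)
  then have "1^2 < (cmod w)^2" by simp
  then show ?thesis using power_less_imp_less_base by fastforce
qed

lemma far_N: "\<eta> > 0 \<Longrightarrow> dist (stp (Some w)) (stp None) > \<eta> \<Longrightarrow> norm w < 2/\<eta>"
proof -
  assume e: "\<eta> > 0" and a: "dist (stp (Some w)) (stp None) > \<eta>"
  have p: "sqrt (1 + (cmod w)^2) > 0" by (simp add: add_pos_nonneg)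
  from a have "2 / sqrt (1 + (cmod w)^2) > \<eta>" by (simp add: stp_None_dist)
  then have "sqrt (1 + (cmod w)^2) < 2/\<eta>" using p e by (simp add: field_simps)
  moreover have "norm w \<le> sqrt (1 + (cmod w)^2)" by (simp add: real_le_rsqrt)
  ultimately show ?thesis by linarith
qed

lemma near_S0: "dist (stp (Some w)) (stp (Some 0)) < 1 \<Longrightarrow> norm w \<le> 1"
proof (rule ccontr)
  assume a: "dist (stp (Some w)) (stp (Some 0)) < 1" and n: "\<not> norm w \<le> 1"
  have p: "sqrt (1 + (cmod w)^2) > 0" by (simp add: add_pos_nonneg)
  have "chordal (Some w) (Some 0) = 2 * cmod w / sqrt (1 + (cmod w)^2)"
    by (simp add: chordal_def)
  with a have "2 * cmod w / sqrt (1 + (cmod w)^2) < 1" by (simp add: chordal_stp)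
  then have "2 * cmod w < sqrt (1 + (cmod w)^2)" using p by (simp add: field_simps)
  moreover have "sqrt (1 + (cmod w)^2) \<le> sqrt ((2 * cmod w)^2)"
  proof (intro real_sqrt_le_mono)
    have "1 \<le> (cmod w)^2" using n by (simp add: one_le_power)
    then show "1 + (cmod w)^2 \<le> (2 * cmod w)^2" by (simp add: power_mult_distrib)
  qed
  moreover have "sqrt ((2 * cmod w)^2) = 2 * cmod w" using real_sqrt_abs[of "2*cmod w"] by simp
  ultimately show False by linarith
qed

definition iota :: "complex \<times> real \<Rightarrow> complex \<times> real" where
  "iota p = (cnj (fst p), - snd p)"

lemma dist_iota: "dist (iota a) (iota b) = dist a b"
proof -
  have "dist (cnj x) (cnj y) = dist x y" for x y :: complex
    by (simp add: dist_norm flip: complex_cnj_diff)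
  moreover have "dist (- x) (- y) = dist x y" for x y :: real by (simp add: dist_real_def)
  ultimately show ?thesis unfolding iota_def by (cases a; cases b) (simp add: dist_Pair_Pair)
qed

lemma stp_inverse: "w \<noteq> 0 \<Longrightarrow> stp (Some (1/w)) = iota (stp (Some w))"
proof -
  assume w: "w \<noteq> 0"
  define A where "A = (cmod w)^2"
  have A: "A > 0" using w unfolding A_def by simp
  have n1: "cmod (1/w) ^2 = 1/A" unfolding A_def by (simp add: norm_divide power_divide)
  have iw: "1/w = cnj w / complex_of_real A" unfolding A_def using complex_div_cnj[of 1 w] by simp
  have "complex_of_real (2 / (1 + 1/A)) * (cnj w / complex_of_real A) = cnj (complex_of_real (2 / (1 + A)) * w)"
  proof -
    have "1 + 1/A = (A+1)/A" using A by (simp add: field_simps)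
    then have "2 / (1 + 1/A) / A = 2 / (1+A)" using A by simp
    then have "complex_of_real (2 / (1 + 1/A)) / complex_of_real A = complex_of_real (2 / (1 + A))"
      by (metis of_real_divide)
    then show ?thesis by (simp add: field_simps)
  qed
  moreover have "(1/A - 1)/(1 + 1/A) = - ((A - 1)/(1 + A))"
  proof -
    have h1: "(1 + 1/A) * A = 1 + A" using A by (simp add: field_simps)
    have h2: "(1/A - 1) * A = - (A - 1)" using A by (simp add: field_simps)
    have "(1/A - 1)/(1 + 1/A) = ((1/A - 1) * A)/((1 + 1/A) * A)"
      using A by (simp only: nonzero_mult_divide_mult_cancel_right)
    then show ?thesis unfolding h1 h2 by (simp add: minus_divide_left)
  qed
  moreover have "stp (Some (1/w)) = (complex_of_real (2 / (1 + 1/A)) * (1/w), (1/A - 1)/(1 + 1/A))"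
    by (simp only: stp_Some n1)
  moreover have "stp (Some w) = (complex_of_real (2 / (1 + A)) * w, (A - 1)/(1 + A))"
    by (simp only: stp_Some A_def)
  ultimately show ?thesis unfolding iota_def iw by simp
qed

lemma stp_zero: "stp (Some 0) = iota (stp None)"
  by (simp add: stp_def iota_def)

lemma chordal_le: "norm x \<le> 1 \<Longrightarrow> norm y \<le> 1 \<Longrightarrow> norm (x - y) \<le> chordal (Some x) (Some y)"
proof -
  assume x: "norm x \<le> 1" and y: "norm y \<le> 1"
  have sx: "sqrt (1 + (cmod x)^2) \<le> sqrt 2" using x by (intro real_sqrt_le_mono) (simp add: abs_square_le_1)
  have sy: "sqrt (1 + (cmod y)^2) \<le> sqrt 2" using y by (intro real_sqrt_le_mono) (simp add: abs_square_le_1)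
  have "sqrt (1 + (cmod x)^2) * sqrt (1 + (cmod y)^2) \<le> sqrt 2 * sqrt 2"
    using sx sy by (intro mult_mono) auto
  then have d: "sqrt (1 + (cmod x)^2) * sqrt (1 + (cmod y)^2) \<le> 2" by simp
  have p: "sqrt (1 + (cmod x)^2) * sqrt (1 + (cmod y)^2) > 0" by (simp add: add_pos_nonneg)
  have "norm (x - y) = 2 * norm (x-y) / 2" by simp
  also have "\<dots> \<le> 2 * norm (x-y) / (sqrt (1 + (cmod x)^2) * sqrt (1 + (cmod y)^2))"
    using d p by (intro divide_left_mono) auto
  finally show ?thesis by (simp add: chordal_def)
qed

lemma cont_stp_Some: "continuous_on S h \<Longrightarrow> continuous_on S (\<lambda>z. stp (Some (h z)))"
proof -
  assume h: "continuous_on S h"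
  have nz: "1 + (cmod (h z))^2 \<noteq> 0" for z
  proof -
    have "1 + (cmod (h z))^2 > 0" by (simp add: add_pos_nonneg)
    then show ?thesis by simp
  qed
  show ?thesis unfolding stp_Some
    by (intro continuous_intros h) (use nz in auto)
qed

lemma sph_iff_ul: "sph_unif_conv_on F g K \<longleftrightarrow>
   uniform_limit K (\<lambda>k z. stp (Some (F k z))) (\<lambda>z. stp (g z)) sequentially"
  unfolding sph_unif_conv_on_def uniform_limit_iff chordal_stp ..



lemma none_open:
  fixes F :: "nat \<Rightarrow> complex \<Rightarrow> complex" and g :: "complex \<Rightarrow> complex option"
  assumes U: "open U" and hol: "\<And>k. F k holomorphic_on UNIV"
    and conv: "\<And>K. compact K \<Longrightarrow> K \<subseteq> U \<Longrightarrow> sph_unif_conv_on F g K"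
    and cont: "continuous_on U (\<lambda>z. stp (g z))"
    and z1: "z1 \<in> U" "g z1 = None"
  shows "\<exists>\<rho>>0. ball z1 \<rho> \<subseteq> U \<and> (\<forall>w\<in>ball z1 \<rho>. g w = None)"
proof -
  obtain \<rho>0 where \<rho>0: "\<rho>0 > 0" "cball z1 \<rho>0 \<subseteq> U" using U z1 open_contains_cball by blast
  obtain \<delta> where \<delta>: "\<delta> > 0" "\<And>z. z \<in> U \<Longrightarrow> dist z z1 < \<delta> \<Longrightarrow> dist (stp (g z)) (stp (g z1)) < 1/2"
    using cont z1(1) unfolding continuous_on_iff by (metis zero_less_divide_1_iff zero_less_numeral)
  define \<rho> where "\<rho> = min \<rho>0 \<delta> / 2"
  have \<rho>: "\<rho> > 0" "\<rho> < \<delta>" "\<rho> < \<rho>0" using \<rho>0 \<delta> unfolding \<rho>_def by auto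
  define C where "C = cball z1 \<rho>"
  have CU: "C \<subseteq> U" using \<rho> \<rho>0 unfolding C_def using subset_cball[of \<rho> \<rho>0 z1] by auto
  have GN: "dist (stp (g z)) (stp None) < 1/2" if "z \<in> C" for z
    using \<delta>(2)[of z] that CU \<rho> z1(2) unfolding C_def by (auto simp: dist_commute)
  have ul: "uniform_limit C (\<lambda>k z. stp (Some (F k z))) (\<lambda>z. stp (g z)) sequentially"
    using conv[of C] CU unfolding C_def sph_iff_ul by auto
  obtain k0 where k0: "\<And>k z. k \<ge> k0 \<Longrightarrow> z \<in> C \<Longrightarrow> dist (stp (Some (F k z))) (stp (g z)) < 1/2"
    using uniform_limitD[OF ul, of "1/2"] unfolding eventually_sequentially by auto
  have Fbig: "1 < norm (F k z)" if "k \<ge> k0" "z \<in> C" for k z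
  proof (rule near_N)
    have "dist (stp (Some (F k z))) (stp None) \<le> dist (stp (Some (F k z))) (stp (g z)) + dist (stp (g z)) (stp None)"
      by (rule dist_triangle)
    then show "dist (stp (Some (F k z))) (stp None) < 1" using k0[OF that] GN[OF that(2)] by linarith
  qed
  have gz: "g z = None \<or> (\<exists>b. g z = Some b \<and> 1 < norm b)" if "z \<in> C" for z
  proof (cases "g z")
    case (Some b)
    then have "1 < norm b" using near_N[of b] GN[OF that] by simp
    then show ?thesis using Some by blast
  qed simp
  define h where "h z = (case g z of None \<Rightarrow> 0 | Some b \<Rightarrow> 1/b)" for z
  have hprops: "stp (Some (h z)) = iota (stp (g z)) \<and> norm (h z) \<le> 1" if "z \<in> C" for z
  proof (cases "g z")
    case None then show ?thesis unfolding h_def by (simp add: stp_zero)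
  next
    case (Some b)
    then have b: "1 < norm b" using gz[OF that] by auto
    then have "b \<noteq> 0" by auto
    then show ?thesis using Some b unfolding h_def by (simp add: stp_inverse norm_divide)
  qed
  define H where "H n z = 1 / F (n + k0) z" for n z
  have Hsmall: "norm (H n z) \<le> 1" "F (n + k0) z \<noteq> 0" if "z \<in> C" for n z
    using Fbig[of "n+k0" z] that unfolding H_def by (auto simp: norm_divide divide_le_eq_1)
  have ulH: "uniform_limit C H h sequentially"
  proof (rule uniform_limitI)
    fix e :: real assume e: "e > 0"
    obtain N where N: "\<And>k z. k \<ge> N \<Longrightarrow> z \<in> C \<Longrightarrow> dist (stp (Some (F k z))) (stp (g z)) < e"
      using uniform_limitD[OF ul e] unfolding eventually_sequentially by auto
    have "\<forall>z\<in>C. dist (H n z) (h z) < e" if n: "n \<ge> N" for n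
    proof
      fix z assume z: "z \<in> C"
      have "dist (H n z) (h z) \<le> chordal (Some (H n z)) (Some (h z))"
        using chordal_le[OF Hsmall(1)[OF z] conjunct2[OF hprops[OF z]]] by (simp add: dist_norm)
      also have "\<dots> = dist (iota (stp (Some (F (n+k0) z)))) (iota (stp (g z)))"
        unfolding chordal_stp using hprops[OF z] Hsmall(2)[OF z] unfolding H_def
        by (simp add: stp_inverse)
      also have "\<dots> < e" unfolding dist_iota using N[of "n+k0" z] n z by simp
      finally show "dist (H n z) (h z) < e" .
    qed
    then show "\<forall>\<^sub>F n in sequentially. \<forall>z\<in>C. dist (H n z) (h z) < e"
      unfolding eventually_sequentially by blast
  qed
  have holH: "H n holomorphic_on C" for n
    unfolding H_def
    by (intro holomorphic_on_divide holomorphic_on_const holomorphic_on_subset[OF hol]) (use Hsmall(2) in auto)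
  have contH: "continuous_on C (H n) \<and> H n holomorphic_on ball z1 \<rho>" for n
    using holH[of n] holomorphic_on_imp_continuous_on holomorphic_on_subset[of "H n" C "ball z1 \<rho>"]
    unfolding C_def by auto
  obtain holh: "h holomorphic_on ball z1 \<rho>"
    using holomorphic_uniform_limit[where f=H and z=z1 and r=\<rho> and F=sequentially and g=h] contH ulH unfolding C_def by auto
  have hz1: "h z1 = 0" unfolding h_def using z1 by simp
  have const: "h constant_on ball z1 \<rho>"
  proof (rule ccontr)
    assume nc: "\<not> h constant_on ball z1 \<rho>"
    have "h z1 \<noteq> 0"
    proof (rule Hurwitz_no_zeros[of "ball z1 \<rho>" H h z1])
      show "open (ball z1 \<rho>)" "connected (ball z1 \<rho>)" by auto
      show "H n holomorphic_on ball z1 \<rho>" for n using contH by auto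
      show "h holomorphic_on ball z1 \<rho>" by (rule holh)
      show "uniform_limit K H h sequentially" if "compact K" "K \<subseteq> ball z1 \<rho>" for K
        using uniform_limit_on_subset[OF ulH, of K] that ball_subset_cball unfolding C_def by blast
      show "\<not> h constant_on ball z1 \<rho>" by (rule nc)
      show "H n z \<noteq> 0" if "z \<in> ball z1 \<rho>" for n z
        using Hsmall(2)[of z n] that unfolding H_def C_def by auto
      show "z1 \<in> ball z1 \<rho>" using \<rho> by simp
    qed
    then show False using hz1 by simp
  qed
  have "g w = None" if w: "w \<in> ball z1 \<rho>" for w
  proof -
    have "h w = 0" using const hz1 w \<rho> unfolding constant_on_def by (metis centre_in_ball)
    moreover have "w \<in> C" using w unfolding C_def by auto
    ultimately show ?thesis using gz[of w] unfolding h_def by auto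
  qed
  moreover have "ball z1 \<rho> \<subseteq> U" using CU unfolding C_def by auto
  ultimately show ?thesis using \<rho> by blast
qed



theorem mainTheorem6:
  fixes f :: "complex \<Rightarrow> complex" and r :: "nat \<Rightarrow> nat" and Q :: "complex set"
  assumes "transcendental_entire f"
    and "strict_mono r" and "\<forall>k. r k > 0"
    and "finite Q"
    and "\<exists>g. sph_loc_unif_conv_on (\<lambda>k. rescale f (r k)) g (UNIV - Q)"
  shows "0 \<in> Q \<and>
    (\<exists>s. 0 < s \<and> s < 1 \<and>
       sph_loc_unif_conv_on (\<lambda>k. rescale f (r k)) (\<lambda>_. None) (ball 0 s - {0}))"
proof -
  define F where "F = (\<lambda>k. rescale f (r k))"
  have holf: "f holomorphic_on UNIV" and npoly: "\<not> (\<exists>p. \<forall>z. f z = poly p z)"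
    using assms(1) unfolding transcendental_entire_def by auto
  obtain g where conv: "sph_loc_unif_conv_on F g (UNIV - Q)" using assms(5) unfolding F_def by blast
  have holF: "F k holomorphic_on UNIV" for k
  proof -
    have e: "F k = (\<lambda>z. f (of_nat (r k) * z) / of_nat (r k))" by (simp add: F_def rescale_def fun_eq_iff)
    have "(\<lambda>z. f (of_nat (r k) * z)) holomorphic_on UNIV"
      using holomorphic_on_compose[of "\<lambda>z. of_nat (r k) * z" UNIV f] holf
      by (auto simp: o_def intro: holomorphic_intros holomorphic_on_subset)
    then show ?thesis unfolding e by (intro holomorphic_intros) auto
  qed
  have contF: "continuous_on S (F k)" for k S
    using holF holomorphic_on_imp_continuous_on holomorphic_on_subset by blast
  have growth: False if "t > 0" "\<forall>k\<ge>k0. \<forall>z. norm z = t \<longrightarrow> norm (F k z) \<le> M" for t M k0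
    using growth_poly[OF holf assms(2) assms(3) that(1)] that(2) npoly unfolding F_def by blast
  have openU: "open (UNIV - Q)" using assms(4) by (simp add: finite_imp_closed open_Diff)
  have ulK: "uniform_limit K (\<lambda>k z. stp (Some (F k z))) (\<lambda>z. stp (g z)) sequentially"
    if "compact K" "K \<subseteq> UNIV - Q" for K
    using conv that unfolding sph_loc_unif_conv_on_def sph_iff_ul by blast
  have part1: "0 \<in> Q"
  proof (rule ccontr)
    assume n0: "0 \<notin> Q"
    obtain \<rho> where \<rho>: "\<rho> > 0" "cball 0 \<rho> \<subseteq> UNIV - Q"
      using openU n0 open_contains_cball by blast
    define K where "K = cball (0::complex) \<rho>"
    have ul: "uniform_limit K (\<lambda>k z. stp (Some (F k z))) (\<lambda>z. stp (g z)) sequentially"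
      using ulK[of K] \<rho> unfolding K_def by auto
    have G0: "stp (g 0) = stp (Some 0)"
    proof -
      have l1: "(\<lambda>k. stp (Some (F k 0))) \<longlonglongrightarrow> stp (g 0)"
        using tendsto_uniform_limitI[OF ul, of 0] \<rho> unfolding K_def by auto
      have rinf: "filterlim (\<lambda>k. real (r k)) at_top sequentially"
        using filterlim_subseq[OF assms(2)] filterlim_real_sequentially filterlim_compose by blast
      have "(\<lambda>k. inverse (real (r k))) \<longlonglongrightarrow> 0"
        using tendsto_inverse_0_at_top[OF rinf] .
      then have "(\<lambda>k. complex_of_real (inverse (real (r k)))) \<longlonglongrightarrow> complex_of_real 0"
        by (rule tendsto_of_real)
      then have "(\<lambda>k. f 0 * complex_of_real (inverse (real (r k)))) \<longlonglongrightarrow> f 0 * 0"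
        by (intro tendsto_mult_left) simp
      moreover have "F k 0 = f 0 * complex_of_real (inverse (real (r k)))" for k
        by (simp add: F_def rescale_def divide_inverse of_real_inverse)
      ultimately have l0: "(\<lambda>k. F k 0) \<longlonglongrightarrow> 0" by simp
      have "isCont (\<lambda>z. stp (Some z)) 0"
        using cont_stp_Some[of UNIV "\<lambda>z. z"] continuous_on_eq_continuous_at[of UNIV] by auto
      then have "(\<lambda>k. stp (Some (F k 0))) \<longlonglongrightarrow> stp (Some 0)"
        using isCont_tendsto_compose[OF _ l0] by blast
      then show ?thesis using l1 LIMSEQ_unique by blast
    qed
    have contG: "continuous_on K (\<lambda>z. stp (g z))"
      by (rule uniform_limit_theorem[OF _ ul]) (auto intro!: always_eventually cont_stp_Some contF)
    obtain \<delta> where \<delta>: "\<delta> > 0" "\<And>z::complex. z \<in> K \<Longrightarrow> dist z 0 < \<delta> \<Longrightarrow> dist (stp (g z)) (stp (g 0)) < 1/2"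
      using contG \<rho>(1) unfolding continuous_on_iff K_def
      by (metis centre_in_cball less_imp_le zero_less_divide_1_iff zero_less_numeral)
    obtain k0 where k0: "\<And>k (z::complex). k \<ge> k0 \<Longrightarrow> z \<in> K \<Longrightarrow> dist (stp (Some (F k z))) (stp (g z)) < 1/2"
      using uniform_limitD[OF ul, of "1/2"] unfolding eventually_sequentially by auto
    define t where "t = min \<delta> \<rho> / 2"
    have t: "t > 0" "t < \<delta>" "t < \<rho>" using \<delta> \<rho> unfolding t_def by auto
    have "\<forall>k\<ge>k0. \<forall>z. norm z = t \<longrightarrow> norm (F k z) \<le> 1"
    proof (intro allI impI)
      fix k and z :: complex assume k: "k \<ge> k0" and z: "norm z = t"
      have zK: "z \<in> K" using z t unfolding K_def by auto
      have "dist (stp (Some (F k z))) (stp (Some 0)) \<le> dist (stp (Some (F k z))) (stp (g z)) + dist (stp (g z)) (stp (g 0))"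
        using G0 dist_triangle by metis
      also have "\<dots> < 1" using k0[OF k zK] \<delta>(2)[OF zK] z t by auto
      finally show "norm (F k z) \<le> 1" by (rule near_S0)
    qed
    then show False using growth[OF t(1)] by blast
  qed
  obtain e :: real where e: "e > 0" "\<And>q. q \<in> Q - {0} \<Longrightarrow> e \<le> norm q"
  proof -
    define e where "e = Min (insert 1 (norm ` (Q - {0})))"
    have fin: "finite (insert 1 (norm ` (Q - {0})))" using assms(4) by simp
    have "e > 0" unfolding e_def using fin by (subst Min_gr_iff) auto
    moreover have "e \<le> norm q" if "q \<in> Q - {0}" for q unfolding e_def using fin that by (intro Min_le) auto
    ultimately show ?thesis using that by blast
  qed
  define s where "s = min (1/2) (e/2)"
  have s: "0 < s" "s < 1" "s < e" using e unfolding s_def by auto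
  define U where "U = ball (0::complex) s - {0}"
  have UQ: "U \<subseteq> UNIV - Q"
  proof
    fix z assume z: "z \<in> U"
    have "z \<notin> Q"
    proof
      assume "z \<in> Q"
      then have "e \<le> norm z" using e(2) z unfolding U_def by auto
      then show False using z s unfolding U_def by auto
    qed
    then show "z \<in> UNIV - Q" by simp
  qed
  have openU': "open U" unfolding U_def by (simp add: open_Diff)
  have connU: "connected U" unfolding U_def by (rule connected_punctured_ball) simp
  have convU: "sph_unif_conv_on F g K" if "compact K" "K \<subseteq> U" for K
    using conv that UQ unfolding sph_loc_unif_conv_on_def by blast
  have ulU: "uniform_limit K (\<lambda>k z. stp (Some (F k z))) (\<lambda>z. stp (g z)) sequentially"
    if "compact K" "K \<subseteq> U" for K
    using ulK[of K] that UQ by blast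
  have contGU: "continuous_on U (\<lambda>z. stp (g z))"
    unfolding continuous_on_eq_continuous_at[OF openU']
  proof
    fix z assume z: "z \<in> U"
    obtain \<epsilon> where \<epsilon>: "\<epsilon> > 0" "cball z \<epsilon> \<subseteq> U" using openU' z open_contains_cball by blast
    have "continuous_on (cball z \<epsilon>) (\<lambda>z. stp (g z))"
      by (rule uniform_limit_theorem[OF _ ulU[of "cball z \<epsilon>"]]) (use \<epsilon> in \<open>auto intro!: always_eventually cont_stp_Some contF\<close>)
    then show "isCont (\<lambda>z. stp (g z)) z"
      by (rule continuous_on_interior) (use \<epsilon> in simp)
  qed
  have allNone: "\<forall>z\<in>U. g z = None"
  proof -
    define O1 where "O1 = interior {z. g z = None}"
    define O2 where "O2 = U \<inter> (\<lambda>z. stp (g z)) -` (- {stp None})"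
    have o1: "open O1" unfolding O1_def by simp
    have o2: "open O2" unfolding O2_def
      by (rule continuous_open_preimage[OF contGU openU']) (simp add: open_Compl)
    have cov: "U \<subseteq> O1 \<union> O2"
    proof
      fix z assume z: "z \<in> U"
      show "z \<in> O1 \<union> O2"
      proof (cases "g z = None")
        case True
        obtain \<rho> where \<rho>: "\<rho> > 0" "ball z \<rho> \<subseteq> U" "\<forall>w\<in>ball z \<rho>. g w = None"
          using none_open[OF openU' holF convU contGU z True] by blast
        have "ball z \<rho> \<subseteq> interior {z. g z = None}"
          by (rule interior_maximal) (use \<rho> in auto)
        then have "z \<in> O1" unfolding O1_def using \<rho>(1) by auto
        then show ?thesis by simp
      next
        case False
        then have "z \<in> O2" using z stp_eq_None_iff[of "g z"] unfolding O2_def by auto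
        then show ?thesis by simp
      qed
    qed
    have disj: "O1 \<inter> O2 \<inter> U = {}"
    proof -
      have "g z = None" if "z \<in> O1" for z using that interior_subset unfolding O1_def by blast
      then show ?thesis unfolding O2_def by auto
    qed
    from connectedD[OF connU o1 o2 disj cov]
    show ?thesis
    proof
      assume "O2 \<inter> U = {}"
      then show ?thesis using cov interior_subset unfolding O1_def by blast
    next
      assume O1e: "O1 \<inter> U = {}"
      have nN: "g z \<noteq> None" if "z \<in> U" for z using that cov O1e
        unfolding O2_def by auto
      define Sp where "Sp = sphere (0::complex) (s/2)"
      have SpU: "Sp \<subseteq> U" unfolding Sp_def U_def using s by auto
      have Spc: "compact Sp" "Sp \<noteq> {}" unfolding Sp_def using s by auto
      have "continuous_on Sp (\<lambda>z. dist (stp (g z)) (stp None))"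
        by (intro continuous_intros continuous_on_subset[OF contGU SpU])
      then obtain z0 where z0: "z0 \<in> Sp" "\<And>y. y \<in> Sp \<Longrightarrow> dist (stp (g z0)) (stp None) \<le> dist (stp (g y)) (stp None)"
        using continuous_attains_inf[OF Spc] by blast
      define \<eta> where "\<eta> = dist (stp (g z0)) (stp None)"
      have \<eta>: "\<eta> > 0" unfolding \<eta>_def using nN[of z0] z0(1) SpU stp_eq_None_iff[of "g z0"] by auto
      obtain k0 where k0: "\<And>k z. k \<ge> k0 \<Longrightarrow> z \<in> Sp \<Longrightarrow> dist (stp (Some (F k z))) (stp (g z)) < \<eta>/2"
        using uniform_limitD[OF ulU[OF Spc(1) SpU], of "\<eta>/2"] \<eta> unfolding eventually_sequentially by auto
      have "\<forall>k\<ge>k0. \<forall>z. norm z = s/2 \<longrightarrow> norm (F k z) \<le> 2/(\<eta>/2)"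
      proof (intro allI impI)
        fix k and z :: complex assume k: "k \<ge> k0" and z: "norm z = s/2"
        have zS: "z \<in> Sp" using z unfolding Sp_def by simp
        have "dist (stp (g z)) (stp None) \<le> dist (stp (g z)) (stp (Some (F k z))) + dist (stp (Some (F k z))) (stp None)"
          by (rule dist_triangle)
        then have "dist (stp (Some (F k z))) (stp None) > \<eta>/2"
          using k0[OF k zS] z0(2)[OF zS] unfolding \<eta>_def by (simp add: dist_commute)
        then show "norm (F k z) \<le> 2/(\<eta>/2)" using far_N[of "\<eta>/2"] \<eta> by fastforce
      qed
      then show ?thesis using growth[of "s/2"] s by (metis half_gt_zero)
    qed
  qed
  have "sph_loc_unif_conv_on F (\<lambda>_. None) U"
    unfolding sph_loc_unif_conv_on_def
  proof (intro allI impI)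
    fix K assume K: "compact K \<and> K \<subseteq> U"
    then have "sph_unif_conv_on F g K" using convU by blast
    then show "sph_unif_conv_on F (\<lambda>_. None) K"
      unfolding sph_unif_conv_on_def
    proof (intro allI impI)
      fix e :: real assume "e > 0"
      then have "\<forall>\<^sub>F k in sequentially. \<forall>z\<in>K. chordal (Some (F k z)) (g z) < e"
        using \<open>sph_unif_conv_on F g K\<close> unfolding sph_unif_conv_on_def by blast
      then show "\<forall>\<^sub>F k in sequentially. \<forall>z\<in>K. chordal (Some (F k z)) None < e"
        by (rule eventually_mono) (use K allNone in \<open>metis subsetD\<close>)
    qed
  qed
  then show ?thesis using part1 s unfolding U_def F_def by blast
qed


end
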